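(* Let $d,s\ge1$ be integers and let $f$ be a real-valued trigonometric polynomial on $[0,1]^d$ with $\hat f(\omega)=0$ whenever $\|\omega\|_\infty>2s$, with minimal value $f_\ast$. Suppose $g=\sum_{j=1}^N|q_j|^2$ for finitely many trigonometric polynomials $q_j$ of degree at most $s$, and $\|f-f_\ast-g\|_{\rm F}\le\varepsilon'$. Then \[ 0\le f_\ast-c_\ast(f,s)\le(2s+1)^d\varepsilon'. \]
   Context: Fourier coefficients $\hat f(\omega)=\int_{[0,1]^d}f(x)e^{-2i\pi\omega^\top x}dx$; F-norm $\|h\|_{\rm F}=\sum_{\omega\in\mathbb Z^d}|\hat h(\omega)|$. A trigonometric polynomial of degree at most $s$ is $q(x)=\sum_{\omega\in\mathbb Z^d,\|\omega\|_\infty\le s}a_\omega e^{2i\pi\omega^\top x}$ with $a_\omega\in\mathbb C$. $c_\ast(f,s)$ is the supremum of $c\in\mathbb R$ such that $f-c=\sum_{j}|q_j|^2$ for finitely many trigonometric polynomials $q_j$ of degree at most $s$. *)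

theory Defs
  imports "HOL-Analysis.Analysis"
begin

definition freq_dot :: "int^'d \<Rightarrow> real^'d \<Rightarrow> real" where
  "freq_dot \<omega> x = (\<Sum>i\<in>UNIV. of_int (\<omega> $ i) * x $ i)"

definition sup_norm_int :: "int^'d \<Rightarrow> int" where
  "sup_norm_int \<omega> = Max ((\<lambda>i. \<bar>\<omega> $ i\<bar>) ` UNIV)"

definition fourier_coeff :: "(real^'d \<Rightarrow> complex) \<Rightarrow> int^'d \<Rightarrow> complex" where
  "fourier_coeff h \<omega> = integral (cbox 0 One) (\<lambda>x. h x * cis (- 2 * pi * freq_dot \<omega> x))"

definition F_norm :: "(real^'d \<Rightarrow> complex) \<Rightarrow> real" where
  "F_norm h = (\<Sum>\<^sub>\<infinity>\<omega>\<in>UNIV. norm (fourier_coeff h \<omega>))"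

definition trig_poly_deg :: "nat \<Rightarrow> (real^'d \<Rightarrow> complex) \<Rightarrow> bool" where
  "trig_poly_deg s q \<longleftrightarrow> (\<exists>a :: int^'d \<Rightarrow> complex. \<forall>x.
      q x = (\<Sum>\<omega>\<in>{\<omega>. sup_norm_int \<omega> \<le> int s}. a \<omega> * cis (2 * pi * freq_dot \<omega> x)))"

definition c_star :: "(real^'d \<Rightarrow> real) \<Rightarrow> nat \<Rightarrow> real" where
  "c_star f s = Sup {c. \<exists>qs. (\<forall>q\<in>set qs. trig_poly_deg s q) \<and>
      (\<forall>x. f x - c = (\<Sum>q\<leftarrow>qs. (cmod (q x))\<^sup>2))}"

end

theory Submission imports Defs begin

definition E :: "int^'d \<Rightarrow> real^'d \<Rightarrow> complex" where
  "E \<omega> x = cis (2 * pi * freq_dot \<omega> x)"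

lemma freq_dot_add: "freq_dot (a + b) x = freq_dot a x + freq_dot b x"
  by (simp add: freq_dot_def sum.distrib distrib_right)
lemma freq_dot_uminus: "freq_dot (- a) x = - freq_dot a x"
  by (simp add: freq_dot_def sum_negf)
lemma freq_dot_diff: "freq_dot (a - b) x = freq_dot a x - freq_dot b x"
  by (simp add: freq_dot_def sum_subtractf left_diff_distrib)
lemma freq_dot_zero[simp]: "freq_dot 0 x = 0"
  by (simp add: freq_dot_def)
lemma freq_dot_shift: "freq_dot a (x + c *\<^sub>R axis i 1) = freq_dot a x + of_int (a $ i) * c"
proof -
  have "freq_dot a (x + c *\<^sub>R axis i 1) = freq_dot a x + (\<Sum>j\<in>UNIV. of_int (a $ j) * (if j = i then c else 0))"
    by (simp add: freq_dot_def sum.distrib distrib_left axis_def; intro sum.cong; auto)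
  also have "(\<Sum>j\<in>UNIV. of_int (a $ j) * (if j = i then c else 0)) = of_int (a $ i) * c"
    by (simp add: if_distrib cong: if_cong)
  finally show ?thesis .
qed

lemma E_add: "E (a + b) x = E a x * E b x"
  by (simp add: E_def freq_dot_add distrib_left cis_mult)
lemma E_diff: "E (a - b) x = E a x * cnj (E b x)"
  by (simp add: E_def freq_dot_diff right_diff_distrib cis_cnj cis_mult)
lemma E_zero[simp]: "E 0 x = 1"
  by (simp add: E_def)
lemma cnj_E: "cnj (E a x) = E (- a) x"
  by (simp add: E_def freq_dot_uminus cis_cnj)
lemma norm_E[simp]: "norm (E a x) = 1"
  by (simp add: E_def)

lemma continuous_freq_dot: "continuous_on S (freq_dot a)"
  unfolding freq_dot_def by (intro continuous_intros)

lemma continuous_E: "continuous_on S (E a)"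
  unfolding E_def by (intro continuous_intros continuous_on_compose2[OF continuous_on_cis] continuous_freq_dot) auto

lemma E_shift: "E a (x + c *\<^sub>R axis i 1) = E a x * cis (2 * pi * of_int (a $ i) * c)"
  by (simp add: E_def freq_dot_shift distrib_left cis_mult mult.assoc)

lemma One_nth[simp]: "(One::real^'n) $ i = 1"
proof -
  have "axis i (1::real) \<in> Basis" by (simp add: cart_basis_def)
  then show ?thesis by (metis cart_eq_inner_axis inner_sum_Basis)
qed

lemma One_sum_nth[simp]: "(\<Sum>x\<in>(Basis::(real^'n) set). x $ i) = 1"
  using One_nth[of i] by simp

lemma axis_nth_if: "axis i (c::real) $ j = (if j = i then c else 0)"
  by (simp add: axis_def)

lemma integral_translate:
  fixes h :: "real^'d \<Rightarrow> complex"
  assumes "continuous_on UNIV h"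
  shows "integral (cbox a b) (\<lambda>x. h (x + c)) = integral (cbox (a + c) (b + c)) h"
proof -
  have "(h has_integral integral (cbox (a+c) (b+c)) h) (cbox (a+c) (b+c))"
    using assms by (intro integrable_integral integrable_continuous) (auto intro: continuous_on_subset)
  from has_integral_affinity'[OF this, of 1 c]
  show ?thesis by (intro integral_unique) simp
qed

lemma integrable_E: "E a integrable_on cbox u v"
  by (intro integrable_continuous continuous_E)

lemma integral_E: fixes \<nu> :: "int^'d" shows "integral (cbox 0 One) (E \<nu>) = (if \<nu> = 0 then 1 else 0)"
proof (cases "\<nu> = 0")
  case True
  have "E \<nu> = (\<lambda>x. 1)" using True by (simp add: fun_eq_iff)
  then show ?thesis using True by simp
next
  case False
  then obtain i where ni: "\<nu> $ i \<noteq> 0" by (metis vec_eq_iff zero_index)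
  define u :: "real^'d" where "u = axis i 1"
  define t :: real where "t = 1 / (2 * \<bar>of_int (\<nu> $ i)\<bar>)"
  have abs1: "\<bar>real_of_int (\<nu> $ i)\<bar> \<ge> 1" using ni by linarith
  have t0: "0 < t" and t1: "t \<le> 1" using abs1 by (auto simp: t_def field_simps)
  have cont: "continuous_on UNIV (E \<nu>)" by (rule continuous_E)
  define I where "I = integral (cbox 0 One) (E \<nu>)"
  have half: "cis (2 * pi * of_int (\<nu> $ i) * t) = -1"
  proof (cases "\<nu> $ i > 0")
    case True
    then have "2 * pi * of_int (\<nu> $ i) * t = pi" using abs1 by (simp add: t_def field_simps)
    then show ?thesis using cis_pi by metis
  next
    case False
    then have "2 * pi * of_int (\<nu> $ i) * t = - pi" using abs1 ni by (simp add: t_def field_simps)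
    moreover have "cis (- pi) = -1" by (simp add: cis_cnj[symmetric])
    ultimately show ?thesis by metis
  qed
  have per: "cis (2 * pi * of_int (\<nu> $ i) * 1) = 1"
    by (metis Ints_of_int cis_multiple_2pi mult.right_neutral)
  have "- I = integral (cbox 0 One) (\<lambda>x. E \<nu> (x + t *\<^sub>R u))"
    by (simp add: I_def u_def E_shift half)
  also have "\<dots> = integral (cbox (t *\<^sub>R u) (One + t *\<^sub>R u)) (E \<nu>)"
    using integral_translate[OF cont, of 0 One "t *\<^sub>R u"] by simp
  also have "\<dots> = integral (cbox (t *\<^sub>R u) (One + t *\<^sub>R u) \<inter> {x. x \<bullet> u \<le> 1}) (E \<nu>)
      + integral (cbox (t *\<^sub>R u) (One + t *\<^sub>R u) \<inter> {x. x \<bullet> u \<ge> 1}) (E \<nu>)"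
    by (rule integral_split[OF integrable_E]) (simp add: u_def cart_basis_def)
  also have "cbox (t *\<^sub>R u) (One + t *\<^sub>R u) \<inter> {x. x \<bullet> u \<le> 1} = cbox (t *\<^sub>R u) One"
    using t0 t1 by (auto simp: mem_box_cart u_def inner_axis axis_nth_if split: if_splits; smt (verit)) 
  also have "cbox (t *\<^sub>R u) (One + t *\<^sub>R u) \<inter> {x. x \<bullet> u \<ge> 1} = cbox (0 + u) ((One + t *\<^sub>R u - u) + u)"
    using t0 t1 by (auto simp: mem_box_cart u_def inner_axis axis_nth_if split: if_splits; smt (verit)) 
  also have "integral \<dots> (E \<nu>) = integral (cbox 0 (One + t *\<^sub>R u - u)) (\<lambda>x. E \<nu> (x + u))"
    using integral_translate[OF cont, of 0 "One + t *\<^sub>R u - u" u] by simp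
  also have "\<dots> = integral (cbox 0 (One + t *\<^sub>R u - u)) (E \<nu>)"
    using E_shift[of \<nu> _ 1 i] per by (simp add: u_def)
  finally have 1: "- I = integral (cbox (t *\<^sub>R u) One) (E \<nu>) + integral (cbox 0 (One + t *\<^sub>R u - u)) (E \<nu>)" .
  have "I = integral (cbox 0 One \<inter> {x. x \<bullet> u \<le> t}) (E \<nu>)
      + integral (cbox 0 One \<inter> {x. x \<bullet> u \<ge> t}) (E \<nu>)"
    unfolding I_def by (rule integral_split[OF integrable_E]) (simp add: u_def cart_basis_def)
  also have "cbox 0 One \<inter> {x. x \<bullet> u \<le> t} = cbox 0 (One + t *\<^sub>R u - u)"
    using t0 t1 by (auto simp: mem_box_cart u_def inner_axis axis_nth_if split: if_splits; smt (verit)) 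
  also have "cbox 0 One \<inter> {x. x \<bullet> u \<ge> t} = cbox (t *\<^sub>R u) One"
    using t0 t1 by (auto simp: mem_box_cart u_def inner_axis axis_nth_if split: if_splits; smt (verit)) 
  finally have "I = - I" using 1 by simp
  then show ?thesis using False by (simp add: I_def)
qed


lemma has_integral_E: "(E \<omega> has_integral (if \<omega> = 0 then 1 else 0)) (cbox 0 One)"
  using integrable_integral[OF integrable_E, of \<omega> 0 One] unfolding integral_E .

lemma fc_sum:
  fixes K :: "(int^'d) set"
  assumes "finite K" and h: "\<And>x. h x = (\<Sum>\<omega>\<in>K. b \<omega> * E \<omega> x)"
  shows "fourier_coeff h \<nu> = (if \<nu> \<in> K then b \<nu> else 0)"
proof -
  have eq: "(\<lambda>x. h x * cis (- 2 * pi * freq_dot \<nu> x)) = (\<lambda>x. \<Sum>\<omega>\<in>K. b \<omega> * E (\<omega> - \<nu>) x)"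
  proof
    fix x
    have "cis (- 2 * pi * freq_dot \<nu> x) = cnj (E \<nu> x)" by (simp add: E_def cis_cnj)
    then show "h x * cis (- 2 * pi * freq_dot \<nu> x) = (\<Sum>\<omega>\<in>K. b \<omega> * E (\<omega> - \<nu>) x)"
      by (simp add: h sum_distrib_right E_diff mult.assoc)
  qed
  have "((\<lambda>x. \<Sum>\<omega>\<in>K. b \<omega> * E (\<omega> - \<nu>) x) has_integral (\<Sum>\<omega>\<in>K. b \<omega> * (if \<omega> - \<nu> = 0 then 1 else 0))) (cbox 0 One)"
    by (intro has_integral_sum assms has_integral_mult_right has_integral_E)
  then have "fourier_coeff h \<nu> = (\<Sum>\<omega>\<in>K. b \<omega> * (if \<omega> - \<nu> = 0 then 1 else 0))"
    unfolding fourier_coeff_def eq by (rule integral_unique)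
  also have "\<dots> = (\<Sum>\<omega>\<in>K. if \<omega> = \<nu> then b \<omega> else 0)"
    by (intro sum.cong) auto
  also have "\<dots> = (if \<nu> \<in> K then b \<nu> else 0)"
    using assms(1) by (simp add: sum.delta')
  finally show ?thesis .
qed

definition trig_on :: "(int^'d) set \<Rightarrow> (real^'d \<Rightarrow> complex) \<Rightarrow> bool" where
  "trig_on K h \<longleftrightarrow> (\<exists>b. \<forall>x. h x = (\<Sum>\<omega>\<in>K. b \<omega> * E \<omega> x))"

lemma trig_on_repr:
  assumes "finite K" "trig_on K h"
  shows "h x = (\<Sum>\<omega>\<in>K. fourier_coeff h \<omega> * E \<omega> x)"
proof -
  obtain b where b: "\<And>x. h x = (\<Sum>\<omega>\<in>K. b \<omega> * E \<omega> x)" using assms(2) unfolding trig_on_def by blast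
  show ?thesis unfolding b[of x] using fc_sum[OF assms(1) b] by (intro sum.cong) auto
qed

lemma trig_on_fc_zero:
  assumes "finite K" "trig_on K h" "\<nu> \<notin> K"
  shows "fourier_coeff h \<nu> = 0"
proof -
  obtain b where b: "\<And>x. h x = (\<Sum>\<omega>\<in>K. b \<omega> * E \<omega> x)" using assms(2) unfolding trig_on_def by blast
  show ?thesis using fc_sum[OF assms(1) b] assms(3) by simp
qed

lemma trig_on_mono:
  assumes "finite K'" "K \<subseteq> K'" "trig_on K h"
  shows "trig_on K' h"
proof -
  obtain b where b: "\<And>x. h x = (\<Sum>\<omega>\<in>K. b \<omega> * E \<omega> x)" using assms(3) unfolding trig_on_def by blast
  have "h x = (\<Sum>\<omega>\<in>K'. (if \<omega> \<in> K then b \<omega> else 0) * E \<omega> x)" for x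
    unfolding b using assms(1,2)
    by (intro sum.mono_neutral_cong_left) auto
  then show ?thesis unfolding trig_on_def by (intro exI[of _ "\<lambda>\<omega>. if \<omega> \<in> K then b \<omega> else 0"]) auto
qed

lemma trig_on_add:
  assumes "trig_on K h" "trig_on K g"
  shows "trig_on K (\<lambda>x. h x + g x)"
proof -
  obtain b where b: "\<And>x. h x = (\<Sum>\<omega>\<in>K. b \<omega> * E \<omega> x)" using assms(1) unfolding trig_on_def by blast
  obtain c where c: "\<And>x. g x = (\<Sum>\<omega>\<in>K. c \<omega> * E \<omega> x)" using assms(2) unfolding trig_on_def by blast
  have "h x + g x = (\<Sum>\<omega>\<in>K. (b \<omega> + c \<omega>) * E \<omega> x)" for x
    unfolding b c by (simp add: sum.distrib distrib_right)
  then show ?thesis unfolding trig_on_def by (intro exI[of _ "\<lambda>\<omega>. b \<omega> + c \<omega>"]) auto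
qed

lemma trig_on_diff:
  assumes "trig_on K h" "trig_on K g"
  shows "trig_on K (\<lambda>x. h x - g x)"
proof -
  obtain b where b: "\<And>x. h x = (\<Sum>\<omega>\<in>K. b \<omega> * E \<omega> x)" using assms(1) unfolding trig_on_def by blast
  obtain c where c: "\<And>x. g x = (\<Sum>\<omega>\<in>K. c \<omega> * E \<omega> x)" using assms(2) unfolding trig_on_def by blast
  have "h x - g x = (\<Sum>\<omega>\<in>K. (b \<omega> - c \<omega>) * E \<omega> x)" for x
    unfolding b c by (simp add: sum_subtractf left_diff_distrib)
  then show ?thesis unfolding trig_on_def by (intro exI[of _ "\<lambda>\<omega>. b \<omega> - c \<omega>"]) auto
qed

lemma trig_on_zero: "trig_on K (\<lambda>x. 0)"
  unfolding trig_on_def by (rule exI[of _ "\<lambda>_. 0"]) simp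

lemma trig_on_const:
  assumes "finite K" "0 \<in> K"
  shows "trig_on K (\<lambda>x. c)"
proof -
  have "c = (\<Sum>\<omega>\<in>K. (if \<omega> = 0 then c else 0) * E \<omega> x)" for x
  proof -
    have "(\<Sum>\<omega>\<in>K. (if \<omega> = 0 then c else 0) * E \<omega> x) = (\<Sum>\<omega>\<in>K. if \<omega> = 0 then c * E \<omega> x else 0)"
      by (intro sum.cong) auto
    also have "\<dots> = c" using assms by (simp add: sum.delta')
    finally show ?thesis by simp
  qed
  then show ?thesis unfolding trig_on_def by (intro exI[of _ "\<lambda>\<omega>. if \<omega> = 0 then c else 0"]) auto
qed

lemma trig_on_sum_list:
  assumes "\<And>q. q \<in> set qs \<Longrightarrow> trig_on K (F q)"
  shows "trig_on K (\<lambda>x. \<Sum>q\<leftarrow>qs. F q x)"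
  using assms
proof (induction qs)
  case Nil
  then show ?case by (simp add: trig_on_zero)
next
  case (Cons a qs)
  then show ?case by (simp add: trig_on_add)
qed

lemma trig_on_cnj:
  assumes "trig_on K h"
  shows "trig_on (uminus ` K) (\<lambda>x. cnj (h x))"
proof -
  obtain b where b: "\<And>x. h x = (\<Sum>\<omega>\<in>K. b \<omega> * E \<omega> x)" using assms(1) unfolding trig_on_def by blast
  have "cnj (h x) = (\<Sum>\<omega>\<in>uminus ` K. cnj (b (- \<omega>)) * E \<omega> x)" for x
    unfolding b by (simp add: sum.reindex cnj_E)
  then show ?thesis unfolding trig_on_def by (intro exI[of _ "\<lambda>\<omega>. cnj (b (- \<omega>))"]) auto
qed

lemma trig_on_mult:
  assumes "finite K" "finite L" "trig_on K h" "trig_on L g"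
  shows "trig_on ((\<lambda>p. fst p + snd p) ` (K \<times> L)) (\<lambda>x. h x * g x)"
proof -
  obtain b where b: "\<And>x. h x = (\<Sum>\<omega>\<in>K. b \<omega> * E \<omega> x)" using assms(3) unfolding trig_on_def by blast
  obtain c where c: "\<And>x. g x = (\<Sum>\<omega>\<in>L. c \<omega> * E \<omega> x)" using assms(4) unfolding trig_on_def by blast
  define d where "d \<nu> = (\<Sum>p\<in>{p\<in>K \<times> L. fst p + snd p = \<nu>}. b (fst p) * c (snd p))" for \<nu>
  have "h x * g x = (\<Sum>\<nu>\<in>(\<lambda>p. fst p + snd p) ` (K \<times> L). d \<nu> * E \<nu> x)" for x
  proof -
    have "h x * g x = (\<Sum>p\<in>K \<times> L. b (fst p) * c (snd p) * E (fst p + snd p) x)"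
      unfolding b c sum_product sum.cartesian_product
      by (intro sum.cong) (auto simp: E_add mult_ac)
    also have "\<dots> = (\<Sum>\<nu>\<in>(\<lambda>p. fst p + snd p) ` (K \<times> L).
        (\<Sum>p\<in>{p\<in>K \<times> L. fst p + snd p = \<nu>}. b (fst p) * c (snd p) * E (fst p + snd p) x))"
      using assms(1,2) by (rule sum.image_gen[OF finite_cartesian_product])
    also have "\<dots> = (\<Sum>\<nu>\<in>(\<lambda>p. fst p + snd p) ` (K \<times> L). d \<nu> * E \<nu> x)"
      unfolding d_def sum_distrib_right by (intro sum.cong refl) auto
    finally show ?thesis .
  qed
  then show ?thesis unfolding trig_on_def by blast
qed


definition D :: "nat \<Rightarrow> (int^'d) set" where "D n = {\<omega>. sup_norm_int \<omega> \<le> int n}"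

lemma sup_norm_le_iff: "sup_norm_int (\<omega>::int^'d) \<le> k \<longleftrightarrow> (\<forall>i. \<bar>\<omega> $ i\<bar> \<le> k)"
  unfolding sup_norm_int_def by (subst Max_le_iff) auto

lemma mem_D: "\<omega> \<in> D n \<longleftrightarrow> (\<forall>i. \<bar>\<omega> $ i\<bar> \<le> int n)"
  by (simp add: D_def sup_norm_le_iff)

lemma finite_D: "finite (D n :: (int^'d) set)"
proof (rule finite_subset)
  show "D n \<subseteq> vec_lambda ` (PiE UNIV (\<lambda>_::'d. {- int n..int n}))"
  proof
    fix \<omega> :: "int^'d" assume "\<omega> \<in> D n"
    then have "(\<lambda>i. \<omega> $ i) \<in> PiE UNIV (\<lambda>_::'d. {- int n..int n})" by (auto simp: mem_D abs_le_iff) (meson minus_le_iff)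
    then show "\<omega> \<in> vec_lambda ` (PiE UNIV (\<lambda>_::'d. {- int n..int n}))"
      by (metis image_eqI vec_lambda_eta)
  qed
  show "finite (vec_lambda ` (PiE UNIV (\<lambda>_::'d. {- int n..int n})))"
    by (intro finite_imageI finite_PiE) auto
qed

lemma zero_in_D[simp]: "0 \<in> D n"
  by (simp add: mem_D)

lemma D_mono: "n \<le> m \<Longrightarrow> D n \<subseteq> D m"
  by (auto simp: mem_D) (meson of_nat_le_iff order_trans)

lemma D_sum_image: "(\<lambda>p. fst p + snd p) ` (D s \<times> uminus ` D s) \<subseteq> D (2 * s)"
proof clarify
  fix a b :: "int^'d" assume "a \<in> D s" "b \<in> D s"
  then show "fst (a, - b) + snd (a, - b) \<in> D (2 * s)"
  proof (unfold mem_D, intro allI)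
    fix i
    have "\<bar>a $ i\<bar> \<le> int s" "\<bar>b $ i\<bar> \<le> int s" using \<open>a \<in> D s\<close> \<open>b \<in> D s\<close> by (auto simp: mem_D)
    then show "\<bar>(fst (a, - b) + snd (a, - b)) $ i\<bar> \<le> int (2 * s)" by simp
  qed
qed

lemma trig_on_D_iff: "trig_on (D s) h \<longleftrightarrow> trig_poly_deg s h"
  unfolding trig_poly_deg_def trig_on_def D_def E_def by (rule refl)

lemma trig_on_single:
  assumes "finite K" "\<alpha> \<in> K"
  shows "trig_on K (\<lambda>x. A * E \<alpha> x)"
proof -
  have "A * E \<alpha> x = (\<Sum>\<omega>\<in>K. (if \<omega> = \<alpha> then A else 0) * E \<omega> x)" for x
  proof -
    have "(\<Sum>\<omega>\<in>K. (if \<omega> = \<alpha> then A else 0) * E \<omega> x) = (\<Sum>\<omega>\<in>K. if \<omega> = \<alpha> then A * E \<omega> x else 0)"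
      by (intro sum.cong) auto
    also have "\<dots> = A * E \<alpha> x" using assms by (simp add: sum.delta')
    finally show ?thesis by simp
  qed
  then show ?thesis unfolding trig_on_def by (intro exI[of _ "\<lambda>\<omega>. if \<omega> = \<alpha> then A else 0"]) auto
qed

lemma sq_lemma:
  fixes c e1 e2 :: complex
  assumes "norm e1 = 1" "norm e2 = 1"
  defines "t \<equiv> sqrt (cmod c / 2)" and "\<sigma> \<equiv> (if c = 0 then 1 else c / cmod c)"
  shows "(cmod (of_real t * \<sigma> * e1 + of_real t * e2))\<^sup>2 = cmod c + Re (c * (e1 * cnj e2))"
proof (cases "c = 0")
  case True
  then show ?thesis by (simp add: t_def)
next
  case False
  have s1: "\<sigma> * cnj \<sigma> = 1" using False
    by (simp add: \<sigma>_def complex_norm_square[symmetric] divide_simps power2_eq_square)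
  have ct: "c = of_real (cmod c) * \<sigma>" using False by (simp add: \<sigma>_def)
  have e1: "e1 * cnj e1 = 1" using assms(1) by (metis complex_norm_square mult.commute one_power2 of_real_1)
  have e2: "e2 * cnj e2 = 1" using assms(2) by (metis complex_norm_square mult.commute one_power2 of_real_1)
  have tt: "t * t = cmod c / 2" by (simp add: t_def)
  define z where "z = of_real t * \<sigma> * e1 + of_real t * e2"
  define w where "w = \<sigma> * (e1 * cnj e2)"
  have "z * cnj z = of_real (t * t) * ((\<sigma> * cnj \<sigma>) * (e1 * cnj e1) + e2 * cnj e2 + w + cnj w)"
    by (simp add: z_def w_def algebra_simps)
  also have "\<dots> = of_real (t * t) * (2 + w + cnj w)" by (simp add: s1 e1 e2)
  finally have "Re (z * cnj z) = t * t * (2 + 2 * Re w)" by simp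
  also have "\<dots> = cmod c + cmod c * Re w" by (simp add: tt algebra_simps)
  also have "cmod c * Re w = Re (c * (e1 * cnj e2))" by (subst ct) (simp add: w_def mult.assoc)
  finally have "Re (z * cnj z) = cmod c + Re (c * (e1 * cnj e2))" .
  moreover have "(cmod z)\<^sup>2 = Re (z * cnj z)" by (simp add: complex_norm_square[symmetric])
  ultimately show ?thesis by (simp add: z_def)
qed

lemma of_real_sum_sq: "complex_of_real (\<Sum>q\<leftarrow>qs. (cmod (q x))\<^sup>2) = (\<Sum>q\<leftarrow>qs. q x * cnj (q x))"
  by (induction qs) (simp_all add: complex_norm_square[symmetric])


lemma half_bound: "\<bar>(v::int)\<bar> \<le> 2 * k \<Longrightarrow> \<bar>v div 2\<bar> \<le> k \<and> \<bar>v div 2 - v\<bar> \<le> k"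
  by presburger

theorem lemma4p1:
  fixes f :: "real^'d \<Rightarrow> real" and s :: nat and qs :: "(real^'d \<Rightarrow> complex) list"
    and \<epsilon>' :: real
  assumes "s \<ge> 1"
    and "\<exists>n. trig_poly_deg n (\<lambda>x. complex_of_real (f x))"
    and "\<And>\<omega>. sup_norm_int \<omega> > 2 * int s \<Longrightarrow> fourier_coeff (\<lambda>x. complex_of_real (f x)) \<omega> = 0"
    and "\<forall>q\<in>set qs. trig_poly_deg s q"
    and "F_norm (\<lambda>x. complex_of_real (f x - (INF y\<in>cbox 0 One. f y) - (\<Sum>q\<leftarrow>qs. (cmod (q x))\<^sup>2))) \<le> \<epsilon>'"
  shows "0 \<le> (INF y\<in>cbox 0 One. f y) - c_star f s
         \<and> (INF y\<in>cbox 0 One. f y) - c_star f s \<le> (2 * real s + 1) ^ CARD('d) * \<epsilon>'"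
proof -
  define m where "m = (INF y\<in>cbox 0 One. f y)"
  define F where "F = (\<lambda>x. complex_of_real (f x))"
  define Q where "Q = (\<lambda>x. \<Sum>q\<leftarrow>qs. q x * cnj (q x))"
  define R where "R = (\<lambda>x. F x - complex_of_real m - Q x)"
  obtain n where "trig_poly_deg n F" using assms(2) unfolding F_def by blast
  then have trF: "trig_on (D n) F" by (simp add: trig_on_D_iff)
  define N where "N = max n (2 * s)"
  define K :: "(int^'d) set" where "K = D N"
  have finK: "finite K" by (simp add: K_def finite_D)
  have trQ2: "trig_on (D (2 * s)) Q"
    unfolding Q_def
  proof (rule trig_on_sum_list)
    fix q assume "q \<in> set qs"
    then have "trig_on (D s) q" using assms(4) by (simp add: trig_on_D_iff)
    then have "trig_on ((\<lambda>p. fst p + snd p) ` (D s \<times> uminus ` D s)) (\<lambda>x. q x * cnj (q x))"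
      by (intro trig_on_mult trig_on_cnj finite_D finite_imageI)
    then show "trig_on (D (2 * s)) (\<lambda>x. q x * cnj (q x))"
      by (rule trig_on_mono[OF finite_D D_sum_image])
  qed
  have trQ: "trig_on K Q"
    by (rule trig_on_mono[OF finK _ trQ2]) (simp add: K_def N_def D_mono)
  have trFK: "trig_on K F"
    by (rule trig_on_mono[OF finK _ trF]) (simp add: K_def N_def D_mono)
  have 0: "0 \<in> K" by (simp add: K_def)
  have reprR: "R x = (\<Sum>\<omega>\<in>K. (fourier_coeff F \<omega> - (if \<omega> = 0 then complex_of_real m else 0) - fourier_coeff Q \<omega>) * E \<omega> x)" for x
  proof -
    have "complex_of_real m = (\<Sum>\<omega>\<in>K. (if \<omega> = 0 then complex_of_real m else 0) * E \<omega> x)"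
    proof -
      have "(\<Sum>\<omega>\<in>K. (if \<omega> = 0 then complex_of_real m else 0) * E \<omega> x) = (\<Sum>\<omega>\<in>K. if \<omega> = 0 then complex_of_real m * E \<omega> x else 0)"
        by (intro sum.cong) auto
      also have "\<dots> = complex_of_real m" using finK 0 by (simp add: sum.delta')
      finally show ?thesis by simp
    qed
    then show ?thesis
      unfolding R_def using trig_on_repr[OF finK trFK, of x] trig_on_repr[OF finK trQ, of x]
      by (simp add: sum_subtractf left_diff_distrib)
  qed
  have fcR: "fourier_coeff R \<nu> = 0" if "\<nu> \<notin> D (2 * s)" for \<nu>
  proof -
    have "fourier_coeff R \<nu> = (if \<nu> \<in> K then fourier_coeff F \<nu> - (if \<nu> = 0 then complex_of_real m else 0) - fourier_coeff Q \<nu> else 0)"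
      by (rule fc_sum[OF finK reprR])
    moreover have "fourier_coeff F \<nu> = 0"
      using assms(3)[of \<nu>] that by (simp add: F_def D_def)
    moreover have "\<nu> \<noteq> 0" using that by auto
    moreover have "fourier_coeff Q \<nu> = 0" by (rule trig_on_fc_zero[OF finite_D trQ2 that])
    ultimately show ?thesis by simp
  qed
  define D2 :: "(int^'d) set" where "D2 = D (2 * s)"
  have finD2: "finite D2" by (simp add: D2_def finite_D)
  have D2K: "D2 \<subseteq> K" by (simp add: D2_def K_def N_def D_mono)
  have trR: "trig_on K R"
    unfolding R_def by (intro trig_on_diff trFK trQ trig_on_const finK 0)
  have R2: "R x = (\<Sum>\<omega>\<in>D2. fourier_coeff R \<omega> * E \<omega> x)" for x
    unfolding trig_on_repr[OF finK trR, of x]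
    by (rule sum.mono_neutral_right[OF finK D2K]) (use fcR D2_def in auto)
  define Fn where "Fn = F_norm R"
  have Fn: "Fn = (\<Sum>\<omega>\<in>D2. norm (fourier_coeff R \<omega>))"
  proof -
    have "Fn = (\<Sum>\<^sub>\<infinity>\<omega>\<in>D2. norm (fourier_coeff R \<omega>))"
      unfolding Fn_def F_norm_def by (rule infsum_cong_neutral) (use fcR D2_def in auto)
    then show ?thesis using finD2 by simp
  qed
  have Rfun: "(\<lambda>x. complex_of_real (f x - m - (\<Sum>q\<leftarrow>qs. (cmod (q x))\<^sup>2))) = R"
    by (simp add: fun_eq_iff R_def F_def Q_def of_real_sum_sq)
  have Fn_le: "Fn \<le> \<epsilon>'" using assms(5) unfolding m_def[symmetric] Rfun Fn_def .
  have Fn_ge: "0 \<le> Fn" unfolding Fn by (simp add: sum_nonneg)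
  define \<alpha> :: "int^'d \<Rightarrow> int^'d" where "\<alpha> \<nu> = (\<chi> i. \<nu> $ i div 2)" for \<nu>
  define \<beta> :: "int^'d \<Rightarrow> int^'d" where "\<beta> \<nu> = \<alpha> \<nu> - \<nu>" for \<nu>
  define t where "t \<nu> = sqrt (cmod (fourier_coeff R \<nu>) / 2)" for \<nu>
  define \<sigma> where "\<sigma> \<nu> = (if fourier_coeff R \<nu> = 0 then 1 else fourier_coeff R \<nu> / cmod (fourier_coeff R \<nu>))" for \<nu>
  define p where "p \<nu> = (\<lambda>x. of_real (t \<nu>) * \<sigma> \<nu> * E (\<alpha> \<nu>) x + of_real (t \<nu>) * E (\<beta> \<nu>) x)" for \<nu>
  have psq: "(cmod (p \<nu> x))\<^sup>2 = cmod (fourier_coeff R \<nu>) + Re (fourier_coeff R \<nu> * E \<nu> x)" for \<nu> x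
  proof -
    have "E \<nu> x = E (\<alpha> \<nu>) x * cnj (E (\<beta> \<nu>) x)"
      using E_diff[of "\<alpha> \<nu>" "\<beta> \<nu>" x] by (simp add: \<beta>_def)
    then show ?thesis unfolding p_def t_def \<sigma>_def
      using sq_lemma[of "E (\<alpha> \<nu>) x" "E (\<beta> \<nu>) x" "fourier_coeff R \<nu>"] by simp
  qed
  have ab: "\<alpha> \<nu> \<in> D s \<and> \<beta> \<nu> \<in> D s" if "\<nu> \<in> D2" for \<nu>
  proof -
    have "\<bar>\<nu> $ i\<bar> \<le> 2 * int s" for i using that by (simp add: D2_def mem_D)
    then have "\<bar>\<nu> $ i div 2\<bar> \<le> int s \<and> \<bar>\<nu> $ i div 2 - \<nu> $ i\<bar> \<le> int s" for i
      using half_bound by blast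
    then show ?thesis by (simp add: mem_D \<alpha>_def \<beta>_def)
  qed
  have trp: "trig_poly_deg s (p \<nu>)" if "\<nu> \<in> D2" for \<nu>
    unfolding trig_on_D_iff[symmetric] p_def
    using ab[OF that] by (intro trig_on_add trig_on_single finite_D) auto
  obtain xs where xs: "set xs = D2" "distinct xs" using finite_distinct_list[OF finD2] by blast
  define q0 where "q0 = (\<lambda>x::real^'d. complex_of_real (sqrt (\<epsilon>' - Fn)))"
  define qs' where "qs' = qs @ map p xs @ [q0]"
  have trq0: "trig_poly_deg s q0"
    unfolding trig_on_D_iff[symmetric] q0_def by (intro trig_on_const finite_D zero_in_D)
  have qs'_trig: "\<forall>q\<in>set qs'. trig_poly_deg s q"
    using assms(4) trp trq0 xs(1) by (auto simp: qs'_def)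
  have qs'_eq: "f x - (m - \<epsilon>') = (\<Sum>q\<leftarrow>qs'. (cmod (q x))\<^sup>2)" for x
  proof -
    have "Re (R x) = f x - m - (\<Sum>q\<leftarrow>qs. (cmod (q x))\<^sup>2)"
      unfolding fun_cong[OF Rfun, of x, symmetric] by (rule Re_complex_of_real)
    moreover have "Re (R x) = (\<Sum>\<omega>\<in>D2. Re (fourier_coeff R \<omega> * E \<omega> x))"
      by (subst R2) (rule Re_sum)
    moreover have "(\<Sum>q\<leftarrow>map p xs. (cmod (q x))\<^sup>2) = (\<Sum>\<omega>\<in>D2. (cmod (p \<omega> x))\<^sup>2)"
      using xs by (simp add: sum_list_distinct_conv_sum_set o_def)
    moreover have "(\<Sum>\<omega>\<in>D2. (cmod (p \<omega> x))\<^sup>2) = Fn + (\<Sum>\<omega>\<in>D2. Re (fourier_coeff R \<omega> * E \<omega> x))"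
      unfolding psq Fn by (simp add: sum.distrib)
    moreover have "(cmod (q0 x))\<^sup>2 = \<epsilon>' - Fn" using Fn_le by (simp add: q0_def)
    moreover have "(\<Sum>q\<leftarrow>qs'. (cmod (q x))\<^sup>2) = (\<Sum>q\<leftarrow>qs. (cmod (q x))\<^sup>2) + (\<Sum>q\<leftarrow>map p xs. (cmod (q x))\<^sup>2) + (cmod (q0 x))\<^sup>2"
      unfolding qs'_def by simp
    ultimately show ?thesis by linarith
  qed
  define S where "S = {c. \<exists>qs. (\<forall>q\<in>set qs. trig_poly_deg s q) \<and>
      (\<forall>x. f x - c = (\<Sum>q\<leftarrow>qs. (cmod (q x))\<^sup>2))}"
  have cs: "c_star f s = Sup S" by (simp add: c_star_def S_def)
  have inS: "m - \<epsilon>' \<in> S" unfolding S_def using qs'_trig qs'_eq by blast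
  have Sle: "c \<le> m" if cS: "c \<in> S" for c
  proof -
    obtain qs1 where "\<forall>x. f x - c = (\<Sum>q\<leftarrow>qs1. (cmod (q x))\<^sup>2)" using cS unfolding S_def by blast
    moreover have "0 \<le> (\<Sum>q\<leftarrow>qs1. (cmod (q x))\<^sup>2)" for x by (intro sum_list_nonneg) auto
    ultimately have "c \<le> f y" for y by (metis diff_ge_0_iff_ge)
    then show ?thesis unfolding m_def
      by (intro cINF_greatest) (auto simp: box_ne_empty)
  qed
  have bdd: "bdd_above S" using Sle by (auto simp: bdd_above_def)
  have c1: "m - \<epsilon>' \<le> Sup S" by (rule cSup_upper[OF inS bdd])
  have c2: "Sup S \<le> m" by (rule cSup_least) (use inS Sle in auto)
  have eps0: "0 \<le> \<epsilon>'" using Fn_ge Fn_le by simp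
  have one: "1 \<le> (2 * real s + 1) ^ CARD('d)" by (rule one_le_power) simp
  then have "\<epsilon>' \<le> (2 * real s + 1) ^ CARD('d) * \<epsilon>'" using eps0
    using mult_right_mono[OF one eps0] by simp
  then show ?thesis using c1 c2 unfolding cs m_def[symmetric] by simp
qed

end
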